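(* Consider the problem $\min_{x\in\mathbb{R}^d} F(x):=f(x)+r(x)$ with $f(x)=\frac1n\sum_{i=1}^n f_i(x)$, where each $f_i:\mathbb{R}^d\to\mathbb{R}$ is differentiable with $\|\nabla f_i(x)\|\le G_i$ for all $x$ and $\|\nabla f_i(x)-\nabla f_i(y)\|\le L_i\|x-y\|$ for all $x,y$, and $r:\mathbb{R}^d\to\mathbb{R}$ is a (possibly non-convex, non-smooth) function whose proximal mapping exists, and $F$ attains its minimum value $F(x^* )$. Let $\tilde L=\frac1n\sum_{i=1}^n L_i>0$. Run ProxSGD-AS with a proper sampling and stepsize $0<\eta<\frac{1}{2\tilde L}$ from $x_1\in\mathbb{R}^d$: for $t=1,\dots,T$, draw $S_t\subseteq[n]$ according to the sampling (independently of all past randomness), set $g_t=\sum_{i\in S_t}\frac{1}{np_i}\nabla f_i(x_t)$ and $x_{t+1}\in \mathrm{prox}_{\eta r}(x_t-\eta g_t)$. Then for all $T\ge 1$, $$\frac1T\sum_{t=1}^T E\big[\mathrm{dist}(0,\hat\partial F(x_{t+1}))^2\big]\le \frac{C_1}{T}\sum_{t=1}^T E\big[\|\nabla f(x_t)-g_t\|^2\big]+\frac{C_2}{T}\Delta,$$ where $C_1=\frac{1+4\tilde L\eta-2\tilde L^2\eta^2}{\tilde L\eta-2\tilde L^2\eta^2}$, $C_2=\frac{2+4\tilde L\eta+4\tilde L^2\eta^2}{\eta-2\tilde L\eta^2}$ and $\Delta=F(x_1)-F(x^* )$.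
   Context: $[n]=\{1,\dots,n\}$. The proximal mapping is $\mathrm{prox}_{\eta r}(y)=\arg\min_{x\in\mathbb{R}^d}\{\frac{1}{2\eta}\|x-y\|^2+r(x)\}$, assumed nonempty; $x_{t+1}$ is any element of it. A sampling is a random subset $S\subseteq[n]$; $p_i=\mathrm{Prob}(i\in S)$, and the sampling is proper if $p_i>0$ for all $i$. The Fréchet subdifferential of $F$ at $x$ is $\hat\partial F(x)=\{v:\liminf_{\bar x\to x}\frac{F(\bar x)-F(x)-v^\top(\bar x-x)}{\|\bar x-x\|}\ge 0\}$, and $\mathrm{dist}(0,A)=\inf_{v\in A}\|v\|$ (Euclidean norm). $E$ denotes expectation over all randomness. *)

theory Defs
  imports "HOL-Analysis.Analysis" "HOL-Probability.Probability"
begin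

definition prox :: "real \<Rightarrow> ('a::real_normed_vector \<Rightarrow> real) \<Rightarrow> 'a \<Rightarrow> 'a set" where
  "prox eta r y = {x. \<forall>z. (1 / (2 * eta)) * (norm (x - y))\<^sup>2 + r x
                          \<le> (1 / (2 * eta)) * (norm (z - y))\<^sup>2 + r z}"

definition frechet_subdiff :: "('a::real_inner \<Rightarrow> real) \<Rightarrow> 'a \<Rightarrow> 'a set" where
  "frechet_subdiff F x = {v. Liminf (at x)
      (\<lambda>y. ereal ((F y - F x - inner v (y - x)) / norm (y - x))) \<ge> 0}"

definition incl_prob :: "nat set pmf \<Rightarrow> nat \<Rightarrow> real" where
  "incl_prob Sam i = measure_pmf.prob Sam {S. i \<in> S}"

primrec hist :: "nat set pmf \<Rightarrow> nat \<Rightarrow> nat set list pmf" where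
  "hist Sam 0 = return_pmf []"
| "hist Sam (Suc t) = bind_pmf (hist Sam t) (\<lambda>h. map_pmf (\<lambda>S. h @ [S]) Sam)"

definition est_grad :: "nat \<Rightarrow> nat set pmf \<Rightarrow> (nat \<Rightarrow> 'a \<Rightarrow> 'a::real_vector) \<Rightarrow> 'a \<Rightarrow> nat set \<Rightarrow> 'a" where
  "est_grad n Sam gf x S = (\<Sum>i\<in>S. (1 / (real n * incl_prob Sam i)) *\<^sub>R gf i x)"

end

theory Submission
  imports Defs
begin


lemma poly_ineq:
  fixes u :: real assumes "0 < u" "u < 1/2"
  shows "u\<^sup>2 * (3 + 4*u)\<^sup>2 \<le> (1 + 3*u) * (1 + 3*u - u\<^sup>2 + 2*u^3)"
proof -
  have "u^3 \<le> u\<^sup>2 / 2" using assms by (simp add: power2_eq_square power3_eq_cube mult_left_mono)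
  have a: "u^3 * 25 \<le> u\<^sup>2 * 25 / 2"
    using assms by (simp add: power2_eq_square power3_eq_cube mult_left_mono)
  have b: "u\<^sup>2 \<le> u/2" using assms by (simp add: power2_eq_square)
  have c: "u^4 \<le> u / 8"
  proof -
    have "u^4 = u * u^3" by (simp add: power_def)
    have "u^3 \<le> (1/2)^3" using assms by (intro power_mono) auto
    hence "u^3 \<le> 1/8" by (simp add: power3_eq_cube)
    hence "u * u^3 \<le> u * (1/8)" using assms by (intro mult_left_mono) auto
    thus ?thesis using \<open>u^4 = u * u^3\<close> by simp
  qed
  have "(1 + 3*u) * (1 + 3*u - u\<^sup>2 + 2*u^3) - u\<^sup>2 * (3 + 4*u)\<^sup>2
        = 1 + 6*u - u\<^sup>2 - 25*u^3 - 10*u^4"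
    by (simp add: algebra_simps power2_eq_square power3_eq_cube power4_eq_xxxx)
  moreover have "1 + 6*u - u\<^sup>2 - 25*u^3 - 10*u^4 \<ge> 0" using a b c assms by linarith
  ultimately show ?thesis by linarith
qed

lemma quad_ineq:
  fixes u a b :: real assumes "0 < u" "u < 1/2" "a \<ge> 0" "b \<ge> 0"
  shows "u\<^sup>2 * (6 + 8*u) * (a*b) \<le> u\<^sup>2 * (1 + 3*u) * a\<^sup>2 + (1 + 3*u - u\<^sup>2 + 2*u^3) * b\<^sup>2"
proof -
  define k where "k = (1 + 3*u) / (3 + 4*u)"
  have kpos: "k > 0" using assms unfolding k_def by simp
  have "2*(a*b) \<le> k * a\<^sup>2 + b\<^sup>2 / k"
  proof -
    have "0 \<le> (k*a - b)\<^sup>2 / k" using kpos by simp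
    also have "(k*a - b)\<^sup>2 / k = k * a\<^sup>2 + b\<^sup>2 / k - 2*(a*b)" using kpos
      by (simp add: field_simps power2_eq_square)
    finally show ?thesis by simp
  qed
  hence "u\<^sup>2 * (3 + 4*u) * (2*(a*b)) \<le> u\<^sup>2 * (3 + 4*u) * (k * a\<^sup>2 + b\<^sup>2 / k)"
    using assms by (intro mult_left_mono) auto
  also have "\<dots> = u\<^sup>2 * (1 + 3*u) * a\<^sup>2 + (u\<^sup>2 * (3 + 4*u)\<^sup>2 / (1 + 3*u)) * b\<^sup>2"
  proof -
    have 1: "u\<^sup>2 * (3 + 4*u) * (k * a\<^sup>2) = u\<^sup>2 * (1 + 3*u) * a\<^sup>2"
      using assms unfolding k_def by (simp add: field_simps)
    have 2: "u\<^sup>2 * (3 + 4*u) * (b\<^sup>2 / k) = (u\<^sup>2 * (3 + 4*u)\<^sup>2 / (1 + 3*u)) * b\<^sup>2"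
      using assms unfolding k_def by (simp add: field_simps power2_eq_square)
    show ?thesis using 1 2 by (simp add: distrib_left)
  qed
  also have "\<dots> \<le> u\<^sup>2 * (1 + 3*u) * a\<^sup>2 + (1 + 3*u - u\<^sup>2 + 2*u^3) * b\<^sup>2"
  proof -
    have "u\<^sup>2 * (3 + 4*u)\<^sup>2 / (1 + 3*u) \<le> 1 + 3*u - u\<^sup>2 + 2*u^3"
      using poly_ineq[OF assms(1,2)] assms by (simp add: divide_le_eq mult.commute)
    thus ?thesis by (intro add_left_mono mult_right_mono) auto
  qed
  finally show ?thesis by (simp add: algebra_simps)
qed

lemma coef1:
  fixes u :: real assumes "0 < u" "u < 1/2"
  shows "(1 + 4*u - 2*u\<^sup>2)/(u - 2*u\<^sup>2) - (1+u) = (1 + 3*u - u\<^sup>2 + 2*u^3) / (u * (1 - 2*u))"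
proof -
  have h1: "u - 2*u\<^sup>2 = u * (1 - 2*u)" by (simp add: algebra_simps power2_eq_square)
  have nz: "1 - 2*u \<noteq> 0" "u \<noteq> 0" using assms by auto
  have "(1 + 4*u - 2*u\<^sup>2) - (1+u) * (u * (1 - 2*u)) = (1 + 3*u - u\<^sup>2 + 2*u^3)"
    by (simp add: algebra_simps power2_eq_square power3_eq_cube)
  thus ?thesis unfolding h1 using nz by (simp add: diff_divide_distrib[symmetric] nonzero_divide_eq_eq
     divide_diff_eq_iff)
qed

lemma frac_helper:
  fixes X Y Z d :: real
  shows "d \<noteq> 0 \<Longrightarrow> X - Y * d = Z \<Longrightarrow> X / d - Y = Z / d"
  by (simp add: field_simps)

lemma frac_helper2:
  fixes X Y W Z d :: real
  shows "d \<noteq> 0 \<Longrightarrow> X - Y * d - W * d = Z \<Longrightarrow> X / d - Y - W = Z / d"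
  by (simp add: field_simps)

lemma coef2:
  fixes u eta :: real assumes "0 < u" "u < 1/2" "eta > 0"
  shows "((2 + 4*u + 4*u\<^sup>2)/(eta - 2*u*eta)) * (eta * (1-u)/2) - (u\<^sup>2+u) - (1+u) = u * (1 + 3*u) / (1 - 2*u)"
proof -
  have h2: "eta - 2*u*eta = eta * (1 - 2*u)" by (simp add: algebra_simps)
  have nz: "1 - 2*u \<noteq> 0" "u \<noteq> 0" "eta \<noteq> 0" using assms by auto
  have "((2 + 4*u + 4*u\<^sup>2)/(eta * (1 - 2*u))) * (eta * (1-u)/2) = (1 + 2*u + 2*u\<^sup>2) * (1-u) / (1 - 2*u)"
    using nz by (simp add: field_simps)
  moreover have "(1 + 2*u + 2*u\<^sup>2) * (1-u) - (u\<^sup>2+u) * (1 - 2*u) - (1+u) * (1 - 2*u) = u * (1 + 3*u)"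
    by (simp add: algebra_simps power2_eq_square power3_eq_cube)
  ultimately show ?thesis unfolding h2 using nz
    by (simp add: frac_helper2)
qed

lemma coef3:
  fixes u eta :: real assumes "0 < u" "u < 1/2" "eta > 0"
  shows "2*(1+u)/eta - (2 + 4*u + 4*u\<^sup>2)/(eta - 2*u*eta) = - (u * (6 + 8*u)) / (eta * (1 - 2*u))"
proof -
  have h2: "eta - 2*u*eta = eta * (1 - 2*u)" by (simp add: algebra_simps)
  have nz: "1 - 2*u \<noteq> 0" "u \<noteq> 0" "eta \<noteq> 0" using assms by auto
  have "2*(1+u)*(1 - 2*u) - (2 + 4*u + 4*u\<^sup>2) = - (u * (6 + 8*u))"
    by (simp add: algebra_simps power2_eq_square)
  thus ?thesis unfolding h2 using nz
    by (simp add: field_simps)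
qed

lemma alg:
  fixes Lt eta dn en p vn wn DF :: real
  assumes Lt: "Lt > 0" and eta: "eta > 0" and small: "Lt*eta < 1/2" and dn: "dn \<ge> 0"
    and en: "en \<ge> 0" and p: "p \<le> dn*en" and vn: "vn \<le> Lt*dn + wn" "0 \<le> vn"
    and wn: "0 \<le> wn" "wn\<^sup>2 = en\<^sup>2 - 2*p/eta + dn\<^sup>2/eta\<^sup>2"
    and DF: "DF \<ge> (1/(2*eta) - Lt/2)*dn\<^sup>2 - p"
  shows "vn\<^sup>2 \<le> ((1 + 4*Lt*eta - 2*Lt\<^sup>2*eta\<^sup>2)/(Lt*eta - 2*Lt\<^sup>2*eta\<^sup>2)) * en\<^sup>2
             + ((2 + 4*Lt*eta + 4*Lt\<^sup>2*eta\<^sup>2)/(eta - 2*Lt*eta\<^sup>2)) * DF"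
proof -
  define u where "u = Lt*eta"
  have u: "0 < u" "u < 1/2" using Lt eta small unfolding u_def by auto
  have Ltu: "Lt = u/eta" using eta unfolding u_def by simp
  have C1eq: "(1 + 4*Lt*eta - 2*Lt\<^sup>2*eta\<^sup>2)/(Lt*eta - 2*Lt\<^sup>2*eta\<^sup>2) = (1 + 4*u - 2*u\<^sup>2)/(u - 2*u\<^sup>2)"
    by (simp add: u_def power_mult_distrib mult.assoc)
  have C2eq: "(2 + 4*Lt*eta + 4*Lt\<^sup>2*eta\<^sup>2)/(eta - 2*Lt*eta\<^sup>2) = (2 + 4*u + 4*u\<^sup>2)/(eta - 2*u*eta)"
    by (simp add: u_def power_mult_distrib mult.assoc power2_eq_square)
  define C1 where "C1 = (1 + 4*u - 2*u\<^sup>2)/(u - 2*u\<^sup>2)"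
  define C2 where "C2 = (2 + 4*u + 4*u\<^sup>2)/(eta - 2*u*eta)"
  have C2pos: "C2 > 0"
  proof -
    have "eta - 2*u*eta = eta * (1 - 2*u)" by (simp add: algebra_simps)
    moreover have "eta * (1 - 2*u) > 0" using eta u by simp
    moreover have "2 + 4*u + 4*u\<^sup>2 > 0" using u by (simp add: add_pos_nonneg)
    ultimately show ?thesis unfolding C2_def by simp
  qed
  define a where "a = dn/eta"
  have dna: "dn = eta*a" using eta unfolding a_def by simp
  have a0: "a \<ge> 0" using dn eta unfolding a_def by simp
  have s1: "vn\<^sup>2 \<le> (Lt*dn + wn)\<^sup>2" using vn by (intro power_mono) auto
  have s2: "(Lt*dn + wn)\<^sup>2 \<le> (Lt\<^sup>2 + Lt/eta)*dn\<^sup>2 + (1+u)*wn\<^sup>2"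
  proof -
    have "(Lt\<^sup>2 + Lt/eta)*dn\<^sup>2 + (1+u)*wn\<^sup>2 - (Lt*dn + wn)\<^sup>2 = Lt/eta * (dn - eta*wn)\<^sup>2"
      using eta unfolding u_def by (simp add: field_simps power2_eq_square)
    moreover have "Lt/eta * (dn - eta*wn)\<^sup>2 \<ge> 0" using Lt eta by simp
    ultimately show ?thesis by linarith
  qed
  have s3: "(Lt\<^sup>2 + Lt/eta)*dn\<^sup>2 + (1+u)*wn\<^sup>2 = (u\<^sup>2+u)*a\<^sup>2 + (1+u)*(en\<^sup>2 - 2*p/eta + a\<^sup>2)"
    unfolding wn(2) Ltu dna using eta by (simp add: field_simps power2_eq_square)
  have eqD: "(1/(2*eta) - Lt/2)*dn\<^sup>2 = eta*(1-u)/2 * a\<^sup>2"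
    unfolding Ltu dna using eta by (simp add: field_simps power2_eq_square)
  have s4: "(u\<^sup>2+u)*a\<^sup>2 + (1+u)*(en\<^sup>2 - 2*p/eta + a\<^sup>2) \<le> C1*en\<^sup>2 + C2*((1/(2*eta) - Lt/2)*dn\<^sup>2 - p)"
  proof -
    have "C1*en\<^sup>2 + C2*((1/(2*eta) - Lt/2)*dn\<^sup>2 - p) - ((u\<^sup>2+u)*a\<^sup>2 + (1+u)*(en\<^sup>2 - 2*p/eta + a\<^sup>2))
        = (C1 - (1+u))*en\<^sup>2 + (C2*(eta*(1-u)/2) - (u\<^sup>2+u) - (1+u))*a\<^sup>2 + (2*(1+u)/eta - C2)*p"
      unfolding eqD by (simp add: algebra_simps)
    also have "\<dots> = (1 + 3*u - u\<^sup>2 + 2*u^3) / (u * (1 - 2*u)) * en\<^sup>2 + u * (1 + 3*u) / (1 - 2*u) * a\<^sup>2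
          + (- (u * (6 + 8*u)) / (eta * (1 - 2*u))) * p"
      unfolding C1_def C2_def coef1[OF u] coef2[OF u eta] coef3[OF u eta] by simp
    also have "\<dots> = (1 / (u * (1 - 2*u))) * ((1 + 3*u - u\<^sup>2 + 2*u^3) * en\<^sup>2 + u\<^sup>2 * (1 + 3*u) * a\<^sup>2
          - u\<^sup>2 * (6 + 8*u) * (p/eta))"
    proof -
      define k where "k = 1 / (u * (1 - 2*u))"
      have nz: "u \<noteq> 0" "1 - 2*u \<noteq> 0" "eta \<noteq> 0" using u eta by auto
      have e1: "(1 + 3*u - u\<^sup>2 + 2*u^3) / (u * (1 - 2*u)) * en\<^sup>2 = k * ((1 + 3*u - u\<^sup>2 + 2*u^3) * en\<^sup>2)"
        unfolding k_def by simp
      have e2: "u * (1 + 3*u) / (1 - 2*u) * a\<^sup>2 = k * (u\<^sup>2 * (1 + 3*u) * a\<^sup>2)"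
        unfolding k_def using nz by (simp add: field_simps power2_eq_square)
      have e3: "(- (u * (6 + 8*u)) / (eta * (1 - 2*u))) * p = k * (- (u\<^sup>2 * (6 + 8*u) * (p/eta)))"
        unfolding k_def using nz by (simp add: field_simps power2_eq_square)
      show ?thesis unfolding e1 e2 e3 k_def[symmetric] by (simp add: algebra_simps)
    qed
    also have "\<dots> \<ge> 0"
    proof -
      have "p/eta \<le> a*en" using p eta unfolding dna by (simp add: divide_le_eq mult.commute mult.left_commute)
      hence "u\<^sup>2 * (6 + 8*u) * (p/eta) \<le> u\<^sup>2 * (6 + 8*u) * (a*en)"
        using u by (intro mult_left_mono) auto
      also have "\<dots> \<le> u\<^sup>2 * (1 + 3*u) * a\<^sup>2 + (1 + 3*u - u\<^sup>2 + 2*u^3) * en\<^sup>2"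
        using quad_ineq[OF u a0 en] .
      finally have "0 \<le> (1 + 3*u - u\<^sup>2 + 2*u^3) * en\<^sup>2 + u\<^sup>2 * (1 + 3*u) * a\<^sup>2 - u\<^sup>2 * (6 + 8*u) * (p/eta)"
        by linarith
      moreover have "1 / (u * (1 - 2*u)) > 0" using u by simp
      ultimately show ?thesis by simp
    qed
    finally show ?thesis by linarith
  qed
  have s5: "C2*((1/(2*eta) - Lt/2)*dn\<^sup>2 - p) \<le> C2*DF" using C2pos DF by (intro mult_left_mono) auto
  show ?thesis unfolding C1eq C2eq C1_def[symmetric] C2_def[symmetric]
    using s1 s2 s3 s4 s5 by linarith
qed



lemma descent:
  fixes f :: "'a::real_inner \<Rightarrow> real"
  assumes der: "\<And>z. (f has_derivative (\<lambda>h. inner h (g z))) (at z)"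
    and lip: "\<And>x y. norm (g x - g y) \<le> L * norm (x - y)"
  shows "f y \<le> f x + inner (y - x) (g x) + L/2 * (norm (y - x))\<^sup>2"
proof -
  define d where "d = y - x"
  define \<phi> where "\<phi> t = f (x + t *\<^sub>R d) - t * inner d (g x) - L/2 * t\<^sup>2 * (norm d)\<^sup>2" for t :: real
  have D: "DERIV \<phi> t :> inner d (g (x + t *\<^sub>R d)) - inner d (g x) - L * t * (norm d)\<^sup>2" for t
  proof -
    have l: "((\<lambda>t. x + t *\<^sub>R d) has_derivative (\<lambda>s. s *\<^sub>R d)) (at t)"
      by (auto intro!: derivative_eq_intros)
    have c: "((\<lambda>t. f (x + t *\<^sub>R d)) has_derivative (\<lambda>s. inner (s *\<^sub>R d) (g (x + t *\<^sub>R d)))) (at t)"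
      using has_derivative_compose[OF l der] by simp
    have c2: "((\<lambda>t. f (x + t *\<^sub>R d)) has_real_derivative inner d (g (x + t *\<^sub>R d))) (at t)"
      unfolding has_field_derivative_def
      by (rule has_derivative_eq_rhs[OF c]) (auto simp: fun_eq_iff)
    show ?thesis unfolding \<phi>_def
      by (rule derivative_eq_intros c2 refl | simp)+
  qed
  have "\<phi> 1 \<le> \<phi> 0"
  proof (rule DERIV_nonpos_imp_nonincreasing[of 0 1])
    fix t :: real assume t: "0 \<le> t" "t \<le> 1"
    have "inner d (g (x + t *\<^sub>R d)) - inner d (g x) = inner d (g (x + t *\<^sub>R d) - g x)"
      by (simp add: inner_diff_right)
    also have "\<dots> \<le> norm d * norm (g (x + t *\<^sub>R d) - g x)" by (rule norm_cauchy_schwarz)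
    also have "\<dots> \<le> norm d * (L * norm (t *\<^sub>R d))"
      using lip[of "x + t *\<^sub>R d" x] by (intro mult_left_mono) auto
    also have "\<dots> = L * t * (norm d)\<^sup>2" using t by (simp add: power2_eq_square)
    finally show "\<exists>y. DERIV \<phi> t :> y \<and> y \<le> 0" using D by (intro exI[of _ "_ - L * t * (norm d)\<^sup>2"]) auto
  qed simp
  thus ?thesis unfolding \<phi>_def d_def by (simp add: inner_commute)
qed

lemma frechet:
  fixes f r :: "'a::euclidean_space \<Rightarrow> real"
  assumes der: "(f has_derivative (\<lambda>h. inner h gx)) (at x)" and eta: "eta > 0"
    and rineq: "\<And>z. r z - r x - inner w (z - x) \<ge> - (1/(2*eta)) * (norm (z - x))\<^sup>2"
  shows "gx + w \<in> frechet_subdiff (\<lambda>z. f z + r z) x"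
proof -
  define a where "a y = (f y - f x - inner (y - x) gx) / norm (y - x) - norm (y - x) / (2*eta)" for y
  have lim1: "((\<lambda>y. (f y - f x - inner (y - x) gx) / norm (y - x)) \<longlongrightarrow> 0) (at x)"
  proof -
    have "((\<lambda>y. ((f y - f x) - inner (y - x) gx) /\<^sub>R norm (y - x)) \<longlongrightarrow> 0) (at x)"
      using der unfolding has_derivative_at_within by blast
    thus ?thesis by (simp add: divide_inverse mult.commute)
  qed
  have lim2: "((\<lambda>y. norm (y - x) / (2*eta)) \<longlongrightarrow> 0) (at x)"
  proof -
    have "((\<lambda>y. norm (y - x)) \<longlongrightarrow> norm (x - x)) (at x)"
      by (intro tendsto_intros)
    hence "((\<lambda>y. norm (y - x) / (2*eta)) \<longlongrightarrow> norm (x - x) / (2*eta)) (at x)"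
      using eta by (intro tendsto_intros) auto
    thus ?thesis by simp
  qed
  have "(a \<longlongrightarrow> 0 - 0) (at x)" unfolding a_def by (intro tendsto_diff lim1 lim2)
  hence "((\<lambda>y. ereal (a y)) \<longlongrightarrow> ereal 0) (at x)" by (intro tendsto_ereal) simp
  hence La: "Liminf (at x) (\<lambda>y. ereal (a y)) = 0"
    by (intro lim_imp_Liminf) (auto simp: zero_ereal_def)
  have ev: "eventually (\<lambda>y. ereal (a y) \<le> ereal (((f y + r y) - (f x + r x) - inner (gx + w) (y - x)) / norm (y - x))) (at x)"
    unfolding eventually_at_filter
  proof (intro always_eventually allI impI)
    fix y assume "y \<noteq> x"
    hence ny: "norm (y - x) > 0" by simp
    have "a y * norm (y - x) = (f y - f x - inner (y - x) gx) - (norm (y - x))\<^sup>2 / (2*eta)"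
      unfolding a_def using ny by (simp add: field_simps power2_eq_square)
    also have "\<dots> \<le> (f y + r y) - (f x + r x) - inner (gx + w) (y - x)"
      using rineq[of y] by (simp add: inner_add_left inner_add_right inner_commute[of w] inner_commute[of gx])
    finally have "a y \<le> ((f y + r y) - (f x + r x) - inner (gx + w) (y - x)) / norm (y - x)"
      using ny by (simp add: le_divide_eq)
    thus "ereal (a y) \<le> ereal (((f y + r y) - (f x + r x) - inner (gx + w) (y - x)) / norm (y - x))"
      by simp
  qed
  have "0 \<le> Liminf (at x) (\<lambda>y. ereal (((f y + r y) - (f x + r x) - inner (gx + w) (y - x)) / norm (y - x)))"
    using Liminf_mono[OF ev] La by simp
  thus ?thesis unfolding frechet_subdiff_def by simp
qed



lemma hist_set: "h \<in> set_pmf (hist Sam t) \<Longrightarrow> length h = t \<and> set h \<subseteq> set_pmf Sam"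
  by (induction t arbitrary: h) fastforce+

lemma hist_finite:
  assumes "set_pmf Sam \<subseteq> Pow {1..(n::nat)}"
  shows "finite (set_pmf (hist Sam t))"
proof (rule finite_subset)
  show "set_pmf (hist Sam t) \<subseteq> {xs. set xs \<subseteq> Pow {1..n} \<and> length xs = t}"
    using hist_set assms by fastforce
  show "finite {xs. set xs \<subseteq> Pow {1..n} \<and> length xs = t}"
    by (rule finite_lists_length_eq) simp
qed

lemma hist_butlast: "map_pmf butlast (hist Sam (Suc t)) = hist Sam t"
  by (simp add: map_bind_pmf pmf.map_comp o_def bind_return_pmf')

lemma telescope:
  fixes a b c :: "nat \<Rightarrow> real" and C1 C2 :: real
  assumes "\<And>t. a (Suc t) \<le> C1 * b (Suc t) + C2 * (c t - c (Suc t))"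
  shows "(\<Sum>t=1..T. a t) \<le> C1 * (\<Sum>t=1..T. b t) + C2 * (c 0 - c T)"
proof (induction T)
  case 0 then show ?case by simp
next
  case (Suc T)
  have "(\<Sum>t=1..Suc T. a t) = (\<Sum>t=1..T. a t) + a (Suc T)" by simp
  also have "\<dots> \<le> C1 * (\<Sum>t=1..T. b t) + C2 * (c 0 - c T) + (C1 * b (Suc T) + C2 * (c T - c (Suc T)))"
    using Suc assms[of T] by linarith
  also have "\<dots> = C1 * (\<Sum>t=1..Suc T. b t) + C2 * (c 0 - c (Suc T))"
    by (simp add: algebra_simps)
  finally show ?case .
qed

lemma exp_lin:
  fixes a b c :: "'b \<Rightarrow> real"
  assumes "finite (set_pmf P)"
  shows "measure_pmf.expectation P (\<lambda>h. C1 * a h + C2 * (b h - c h))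
    = C1 * measure_pmf.expectation P a + C2 * (measure_pmf.expectation P b - measure_pmf.expectation P c)"
proof -
  have i: "integrable (measure_pmf P) (u :: 'b \<Rightarrow> real)" for u by (rule integrable_measure_pmf_finite[OF assms])
  have "measure_pmf.expectation P (\<lambda>h. C1 * a h + C2 * (b h - c h))
      = measure_pmf.expectation P (\<lambda>h. C1 * a h) + measure_pmf.expectation P (\<lambda>h. C2 * (b h - c h))"
    by (rule Bochner_Integration.integral_add[OF i i])
  also have "measure_pmf.expectation P (\<lambda>h. C2 * (b h - c h)) = C2 * measure_pmf.expectation P (\<lambda>h. b h - c h)"
    by (rule integral_mult_right_zero)
  also have "measure_pmf.expectation P (\<lambda>h. b h - c h) = measure_pmf.expectation P b - measure_pmf.expectation P c"
    by (rule Bochner_Integration.integral_diff[OF i i])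
  finally show ?thesis by simp
qed

lemma norm_diff_sq:
  fixes a b :: "'a::real_inner"
  shows "(norm (a - b))\<^sup>2 = (norm a)\<^sup>2 - 2 * inner a b + (norm b)\<^sup>2"
  by (simp add: power2_norm_eq_inner inner_diff_left inner_diff_right inner_commute)

lemma norm_add_sq:
  fixes a b :: "'a::real_inner"
  shows "(norm (a + b))\<^sup>2 = (norm a)\<^sup>2 + 2 * inner a b + (norm b)\<^sup>2"
  by (simp add: power2_norm_eq_inner inner_add_left inner_add_right inner_commute)

theorem theorem4p2:
  fixes n :: nat
    and fi :: "nat \<Rightarrow> 'a::euclidean_space \<Rightarrow> real"
    and gf :: "nat \<Rightarrow> 'a \<Rightarrow> 'a"
    and G L :: "nat \<Rightarrow> real"
    and r :: "'a \<Rightarrow> real"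
    and Sam :: "nat set pmf"
    and eta :: real
    and x1 xstar :: 'a
    and X :: "nat set list \<Rightarrow> 'a"
    and T :: nat
  assumes grad: "\<And>i x. i \<in> {1..n} \<Longrightarrow> GDERIV (fi i) x :> gf i x"
    and bounded: "\<And>i x. i \<in> {1..n} \<Longrightarrow> norm (gf i x) \<le> G i"
    and lipschitz: "\<And>i x y. i \<in> {1..n} \<Longrightarrow> norm (gf i x - gf i y) \<le> L i * norm (x - y)"
    and prox_ex: "\<And>y. prox eta r y \<noteq> {}"
    and xstar_min: "\<And>x. (1 / real n) * (\<Sum>i=1..n. fi i x) + r x
                        \<ge> (1 / real n) * (\<Sum>i=1..n. fi i xstar) + r xstar"
    and Lpos: "(\<Sum>i=1..n. L i) / real n > 0"
    and sampling: "set_pmf Sam \<subseteq> Pow {1..n}"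
    and proper: "\<And>i. i \<in> {1..n} \<Longrightarrow> incl_prob Sam i > 0"
    and eta_pos: "0 < eta"
    and eta_le: "eta < 1 / (2 * ((\<Sum>i=1..n. L i) / real n))"
    and X_init: "X [] = x1"
    and X_step: "\<And>h S. set (h @ [S]) \<subseteq> set_pmf Sam \<Longrightarrow>
                   X (h @ [S]) \<in> prox eta r (X h - eta *\<^sub>R est_grad n Sam gf (X h) S)"
    and T_pos: "T \<ge> 1"
  shows "(let Lt = (\<Sum>i=1..n. L i) / real n;
              F = (\<lambda>x. (1 / real n) * (\<Sum>i=1..n. fi i x) + r x);
              gradf = (\<lambda>x. (1 / real n) *\<^sub>R (\<Sum>i=1..n. gf i x));
              C1 = (1 + 4 * Lt * eta - 2 * Lt\<^sup>2 * eta\<^sup>2) / (Lt * eta - 2 * Lt\<^sup>2 * eta\<^sup>2);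
              C2 = (2 + 4 * Lt * eta + 4 * Lt\<^sup>2 * eta\<^sup>2) / (eta - 2 * Lt * eta\<^sup>2);
              Delta = F x1 - F xstar
          in (1 / real T) * (\<Sum>t=1..T. measure_pmf.expectation (hist Sam t)
                   (\<lambda>h. (infdist 0 (frechet_subdiff F (X h)))\<^sup>2))
             \<le> (C1 / real T) * (\<Sum>t=1..T. measure_pmf.expectation (hist Sam t)
                   (\<lambda>h. (norm (gradf (X (butlast h)) - est_grad n Sam gf (X (butlast h)) (last h)))\<^sup>2))
               + (C2 / real T) * Delta)"
proof -
  define Lt where "Lt = (\<Sum>i=1..n. L i) / real n"
  define F where "F = (\<lambda>x. (1 / real n) * (\<Sum>i=1..n. fi i x) + r x)"
  define gradf where "gradf = (\<lambda>x. (1 / real n) *\<^sub>R (\<Sum>i=1..n. gf i x))"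
  define C1 where "C1 = (1 + 4 * Lt * eta - 2 * Lt\<^sup>2 * eta\<^sup>2) / (Lt * eta - 2 * Lt\<^sup>2 * eta\<^sup>2)"
  define C2 where "C2 = (2 + 4 * Lt * eta + 4 * Lt\<^sup>2 * eta\<^sup>2) / (eta - 2 * Lt * eta\<^sup>2)"
  define f where "f = (\<lambda>x. (1 / real n) * (\<Sum>i=1..n. fi i x))"
  define Dist where "Dist = (\<lambda>h. (infdist 0 (frechet_subdiff F (X h)))\<^sup>2)"
  define Err where "Err = (\<lambda>h. (norm (gradf (X (butlast h)) - est_grad n Sam gf (X (butlast h)) (last h)))\<^sup>2)"
  define FX where "FX = (\<lambda>h. F (X h))"
  have n1: "n \<ge> 1" using Lpos by (cases n) auto
  have Lt: "Lt > 0" using Lpos unfolding Lt_def .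
  have small: "Lt * eta < 1/2"
  proof -
    have "eta * (2 * Lt) < 1" using eta_le Lt unfolding Lt_def[symmetric] by (simp add: less_divide_eq)
    thus ?thesis by (simp add: algebra_simps)
  qed
  have Ff: "F = (\<lambda>x. f x + r x)" unfolding F_def f_def ..
  have fder: "(f has_derivative (\<lambda>h. inner h (gradf z))) (at z)" for z
  proof -
    have "((\<lambda>x. \<Sum>i=1..n. fi i x) has_derivative (\<lambda>h. \<Sum>i=1..n. inner h (gf i z))) (at z)"
      using grad unfolding gderiv_def by (intro has_derivative_sum) auto
    hence "((\<lambda>x. (1 / real n) * (\<Sum>i=1..n. fi i x)) has_derivative (\<lambda>h. (1 / real n) * (\<Sum>i=1..n. inner h (gf i z)))) (at z)"
      by (intro has_derivative_mult_right)
    thus ?thesis unfolding f_def gradf_def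
      by (simp add: inner_sum_right)
  qed
  have flip: "norm (gradf x - gradf y) \<le> Lt * norm (x - y)" for x y
  proof -
    have "gradf x - gradf y = (1 / real n) *\<^sub>R (\<Sum>i=1..n. gf i x - gf i y)"
      unfolding gradf_def by (simp add: sum_subtractf scaleR_diff_right)
    hence "norm (gradf x - gradf y) = (1 / real n) * norm (\<Sum>i=1..n. gf i x - gf i y)" by simp
    also have "\<dots> \<le> (1 / real n) * (\<Sum>i=1..n. L i * norm (x - y))"
      by (intro mult_left_mono order.trans[OF norm_sum] sum_mono lipschitz) auto
    also have "\<dots> = Lt * norm (x - y)" unfolding Lt_def by (simp add: sum_distrib_right)
    finally show ?thesis .
  qed
  have C2pos: "C2 > 0"
  proof -
    have "eta - 2 * Lt * eta\<^sup>2 = eta * (1 - 2 * (Lt * eta))" by (simp add: algebra_simps power2_eq_square)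
    moreover have "eta * (1 - 2 * (Lt * eta)) > 0" using eta_pos small by simp
    moreover have "2 + 4 * Lt * eta + 4 * Lt\<^sup>2 * eta\<^sup>2 > 0" using Lt eta_pos by (simp add: add_pos_nonneg)
    ultimately show ?thesis unfolding C2_def by simp
  qed
  have pointwise: "Dist h \<le> C1 * Err h + C2 * (FX (butlast h) - FX h)"
    if hin: "h \<in> set_pmf (hist Sam (Suc t))" for h t
  proof -
    from hist_set[OF hin] have hl: "length h = Suc t" and hs: "set h \<subseteq> set_pmf Sam" by auto
    define h0 where "h0 = butlast h"
    define S where "S = last h"
    have hh: "h = h0 @ [S]" unfolding h0_def S_def using hl by (intro append_butlast_last_id[symmetric]) auto
    define x where "x = X h0"
    define x' where "x' = X h"
    define g where "g = est_grad n Sam gf x S"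
    define y where "y = x - eta *\<^sub>R g"
    define e where "e = gradf x - g"
    define d where "d = x' - x"
    define w where "w = (1/eta) *\<^sub>R (y - x')"
    have "x' \<in> prox eta r y" unfolding x'_def y_def x_def g_def using X_step[of h0 S] hs hh by simp
    hence pr: "(1 / (2 * eta)) * (norm (x' - y))\<^sup>2 + r x' \<le> (1 / (2 * eta)) * (norm (z - y))\<^sup>2 + r z" for z
      unfolding prox_def by blast
    have rineq: "r z - r x' - inner w (z - x') \<ge> - (1/(2*eta)) * (norm (z - x'))\<^sup>2" for z
    proof -
      have sq: "(norm (z - y))\<^sup>2 = (norm (z - x'))\<^sup>2 + 2 * inner (z - x') (x' - y) + (norm (x' - y))\<^sup>2"
        using norm_add_sq[of "z - x'" "x' - y"] by simp
      have wi: "inner w (z - x') = - (1/eta) * inner (z - x') (x' - y)"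
      proof -
        have "inner (y - x') (z - x') = - inner (z - x') (x' - y)"
          by (simp add: inner_commute inner_diff_left inner_diff_right)
        thus ?thesis unfolding w_def by simp
      qed
      have A: "r x' - r z \<le> (1/(2*eta)) * ((norm (z - y))\<^sup>2 - (norm (x' - y))\<^sup>2)"
        using pr[of z] by (simp add: right_diff_distrib)
      have B: "(1/(2*eta)) * ((norm (z - y))\<^sup>2 - (norm (x' - y))\<^sup>2)
          = (1/(2*eta)) * (norm (z - x'))\<^sup>2 - inner w (z - x')"
        unfolding sq wi using eta_pos by (simp add: field_simps)
      show ?thesis using A B by linarith
    qed
    have vin: "gradf x' + w \<in> frechet_subdiff F x'"
      unfolding Ff by (rule frechet[OF fder eta_pos rineq])
    define v where "v = gradf x' + w"
    have v_eq: "v = (gradf x' - gradf x) + (e - (1/eta) *\<^sub>R d)"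
      unfolding v_def w_def e_def d_def y_def using eta_pos by (simp add: algebra_simps)
    have D1: "Dist h \<le> (norm v)\<^sup>2"
    proof -
      have "infdist 0 (frechet_subdiff F x') \<le> dist 0 v" using vin unfolding v_def by (rule infdist_le)
      hence "infdist 0 (frechet_subdiff F x') \<le> norm v" by simp
      thus ?thesis unfolding Dist_def x'_def[symmetric] by (intro power_mono infdist_nonneg)
    qed
    have vn: "norm v \<le> Lt * norm d + norm (e - (1/eta) *\<^sub>R d)"
    proof -
      have "norm v \<le> norm (gradf x' - gradf x) + norm (e - (1/eta) *\<^sub>R d)" unfolding v_eq by (rule norm_triangle_ineq)
      moreover have "norm (gradf x' - gradf x) \<le> Lt * norm d" unfolding d_def by (rule flip)
      ultimately show ?thesis by linarith
    qed
    have wn: "(norm (e - (1/eta) *\<^sub>R d))\<^sup>2 = (norm e)\<^sup>2 - 2 * inner e d / eta + (norm d)\<^sup>2 / eta\<^sup>2"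
    proof -
      have "(norm (e - (1/eta) *\<^sub>R d))\<^sup>2 = (norm e)\<^sup>2 - 2 * inner e ((1/eta) *\<^sub>R d) + (norm ((1/eta) *\<^sub>R d))\<^sup>2"
        by (rule norm_diff_sq)
      also have "\<dots> = (norm e)\<^sup>2 - 2 * inner e d / eta + (norm d)\<^sup>2 / eta\<^sup>2"
        using eta_pos by (simp add: power_mult_distrib power_divide)
      finally show ?thesis .
    qed
    have pcs: "inner e d \<le> norm d * norm e"
      using norm_cauchy_schwarz[of e d] by (simp add: mult.commute)
    have fdesc: "f x' \<le> f x + inner d (gradf x) + Lt/2 * (norm d)\<^sup>2"
      unfolding d_def by (rule descent[OF fder flip])
    have rdesc: "r x' \<le> r x - (1/(2*eta)) * (norm d)\<^sup>2 - inner d g"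
    proof -
      have "x' - y = d + eta *\<^sub>R g" unfolding d_def y_def by simp
      hence "(norm (x' - y))\<^sup>2 = (norm d)\<^sup>2 + 2 * inner d (eta *\<^sub>R g) + (norm (eta *\<^sub>R g))\<^sup>2"
        by (simp only: norm_add_sq)
      hence "(norm (x' - y))\<^sup>2 = (norm d)\<^sup>2 + 2 * eta * inner d g + eta\<^sup>2 * (norm g)\<^sup>2"
        using eta_pos by (simp add: power_mult_distrib)
      moreover have "(norm (x - y))\<^sup>2 = eta\<^sup>2 * (norm g)\<^sup>2"
        unfolding y_def using eta_pos by (simp add: power2_eq_square)
      ultimately show ?thesis using pr[of x] eta_pos by (simp add: field_simps power2_eq_square)
    qed
    have DF: "FX h0 - FX h \<ge> (1/(2*eta) - Lt/2) * (norm d)\<^sup>2 - inner e d"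
    proof -
      have "inner d (gradf x) - inner d g = inner e d" unfolding e_def by (simp add: inner_diff_right inner_commute)
      thus ?thesis unfolding FX_def Ff x_def[symmetric] x'_def[symmetric] using fdesc rdesc
        by (simp add: algebra_simps)
    qed
    have "(norm v)\<^sup>2 \<le> C1 * (norm e)\<^sup>2 + C2 * (FX h0 - FX h)"
      unfolding C1_def C2_def
      by (rule alg[OF Lt eta_pos small norm_ge_zero norm_ge_zero pcs vn norm_ge_zero norm_ge_zero wn DF])
    moreover have "Err h = (norm e)\<^sup>2" unfolding Err_def e_def g_def x_def h0_def S_def ..
    ultimately show ?thesis using D1 unfolding h0_def by simp
  qed
  have fin: "finite (set_pmf (hist Sam t))" for t by (rule hist_finite[OF sampling])
  have int: "integrable (measure_pmf (hist Sam t)) (u :: _ \<Rightarrow> real)" for t u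
    by (rule integrable_measure_pmf_finite[OF fin])
  have step: "measure_pmf.expectation (hist Sam (Suc t)) Dist
      \<le> C1 * measure_pmf.expectation (hist Sam (Suc t)) Err
        + C2 * (measure_pmf.expectation (hist Sam t) FX - measure_pmf.expectation (hist Sam (Suc t)) FX)" for t
  proof -
    have "measure_pmf.expectation (hist Sam (Suc t)) Dist
        \<le> measure_pmf.expectation (hist Sam (Suc t)) (\<lambda>h. C1 * Err h + C2 * (FX (butlast h) - FX h))"
      by (intro integral_mono_AE int AE_pmfI pointwise)
    also have "\<dots> = C1 * measure_pmf.expectation (hist Sam (Suc t)) Err
        + C2 * (measure_pmf.expectation (hist Sam (Suc t)) (\<lambda>h. FX (butlast h)) - measure_pmf.expectation (hist Sam (Suc t)) FX)"
      by (rule exp_lin[OF fin])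
    also have "measure_pmf.expectation (hist Sam (Suc t)) (\<lambda>h. FX (butlast h)) = measure_pmf.expectation (hist Sam t) FX"
    proof -
      have "measure_pmf.expectation (map_pmf butlast (hist Sam (Suc t))) FX
          = measure_pmf.expectation (hist Sam (Suc t)) (\<lambda>h. FX (butlast h))"
        by (rule integral_map_pmf)
      thus ?thesis unfolding hist_butlast by simp
    qed
    finally show ?thesis .
  qed
  have sum: "(\<Sum>t=1..T. measure_pmf.expectation (hist Sam t) Dist)
      \<le> C1 * (\<Sum>t=1..T. measure_pmf.expectation (hist Sam t) Err)
        + C2 * (measure_pmf.expectation (hist Sam 0) FX - measure_pmf.expectation (hist Sam T) FX)"
    by (rule telescope) (rule step)
  have E0: "measure_pmf.expectation (hist Sam 0) FX = F x1" unfolding FX_def by (simp add: X_init)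
  have ET: "measure_pmf.expectation (hist Sam T) FX \<ge> F xstar"
  proof -
    have "measure_pmf.expectation (hist Sam T) (\<lambda>_. F xstar) \<le> measure_pmf.expectation (hist Sam T) FX"
      by (intro integral_mono_AE int AE_pmfI) (unfold FX_def F_def, rule xstar_min)
    thus ?thesis by simp
  qed
  have main: "(\<Sum>t=1..T. measure_pmf.expectation (hist Sam t) Dist)
      \<le> C1 * (\<Sum>t=1..T. measure_pmf.expectation (hist Sam t) Err) + C2 * (F x1 - F xstar)"
  proof -
    have "C2 * (measure_pmf.expectation (hist Sam 0) FX - measure_pmf.expectation (hist Sam T) FX) \<le> C2 * (F x1 - F xstar)"
      using E0 ET C2pos by (intro mult_left_mono) auto
    thus ?thesis using sum by linarith
  qed
  have Tpos: "real T > 0" using T_pos by simp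
  have "(1 / real T) * (\<Sum>t=1..T. measure_pmf.expectation (hist Sam t) Dist)
      \<le> (1 / real T) * (C1 * (\<Sum>t=1..T. measure_pmf.expectation (hist Sam t) Err) + C2 * (F x1 - F xstar))"
    using main Tpos by (intro mult_left_mono) auto
  also have "\<dots> = (C1 / real T) * (\<Sum>t=1..T. measure_pmf.expectation (hist Sam t) Err) + (C2 / real T) * (F x1 - F xstar)"
    by (simp add: algebra_simps)
  finally have fin_ineq: "(1 / real T) * (\<Sum>t=1..T. measure_pmf.expectation (hist Sam t) Dist)
      \<le> (C1 / real T) * (\<Sum>t=1..T. measure_pmf.expectation (hist Sam t) Err) + (C2 / real T) * (F x1 - F xstar)" .
  show ?thesis unfolding Let_def
    using fin_ineq unfolding Dist_def Err_def F_def gradf_def C1_def C2_def Lt_def .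
qed

end
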